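(* Let $n\ge1$ and $0\le k_1<k_2\le n$ be integers. Let $C_1\subseteq\mathbb{F}_4^n$ be a self-orthogonal additive code with $|C_1|=2^{n-k_1}$, and suppose every nonzero vector of $C_1^\perp$ has weight at least $d_1$. Let $d\ge1$ be an integer with \[ \sum_{i=1}^{d-1}3^i\binom{n}{i}<\frac{2^{n-k_1}-1}{2^{k_2-k_1}-1}. \] Then there exists a self-orthogonal additive code $C_2\subseteq C_1$ with $|C_2|=2^{n-k_2}$ such that every nonzero vector of $C_2^\perp$ has weight at least $\min\{d,d_1\}$.
   Context: $\mathbb{F}_4=\{0,1,\omega,\omega^2\}$, $\omega^2=\omega+1$, $\bar x=x^2$; trace inner product $\langle u,v\rangle=\sum_i(u_i\bar v_i+\bar u_iv_i)\in\mathbb{F}_2$ on $\mathbb{F}_4^n$; additive codes are $\mathbb{F}_2$-subspaces of $\mathbb{F}_4^n$; $C^\perp$ is the trace dual; self-orthogonal means $C\subseteq C^\perp$; weight = number of nonzero coordinates. *)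

theory Defs
  imports Complex_Main
begin

text \<open>The field F_4 = {0, 1, w, w^2} with w^2 = w + 1.\<close>
datatype f4 = F0 | F1 | FW | FW2

fun f4add :: "f4 \<Rightarrow> f4 \<Rightarrow> f4" where
  "f4add F0 y = y"
| "f4add x F0 = x"
| "f4add F1 F1 = F0" | "f4add F1 FW = FW2" | "f4add F1 FW2 = FW"
| "f4add FW F1 = FW2" | "f4add FW FW = F0" | "f4add FW FW2 = F1"
| "f4add FW2 F1 = FW" | "f4add FW2 FW = F1" | "f4add FW2 FW2 = F0"

fun f4mul :: "f4 \<Rightarrow> f4 \<Rightarrow> f4" where
  "f4mul F0 y = F0"
| "f4mul x F0 = F0"
| "f4mul F1 y = y"
| "f4mul x F1 = x"
| "f4mul FW FW = FW2" | "f4mul FW FW2 = F1"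
| "f4mul FW2 FW = F1" | "f4mul FW2 FW2 = FW"

instantiation f4 :: comm_monoid_add
begin
definition zero_f4 :: f4 where "zero_f4 = F0"
definition plus_f4 :: "f4 \<Rightarrow> f4 \<Rightarrow> f4" where "plus_f4 = f4add"
instance
proof
  fix a b c :: f4
  show "a + b + c = a + (b + c)" unfolding plus_f4_def
    by (cases a; cases b; cases c) auto
  show "a + b = b + a" unfolding plus_f4_def
    by (cases a; cases b) auto
  show "0 + a = a" unfolding plus_f4_def zero_f4_def by simp
qed
end

definition f4conj :: "f4 \<Rightarrow> f4" where "f4conj x = f4mul x x"

definition vecs :: "nat \<Rightarrow> (nat \<Rightarrow> f4) set" where
  "vecs n = {v. \<forall>i\<ge>n. v i = F0}"

definition vadd :: "(nat \<Rightarrow> f4) \<Rightarrow> (nat \<Rightarrow> f4) \<Rightarrow> (nat \<Rightarrow> f4)" where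
  "vadd u v = (\<lambda>i. f4add (u i) (v i))"

text \<open>Trace inner product sum_i (u_i conj(v_i) + conj(u_i) v_i); its value lies in F_2 = {0,1}.\<close>
definition tip :: "nat \<Rightarrow> (nat \<Rightarrow> f4) \<Rightarrow> (nat \<Rightarrow> f4) \<Rightarrow> f4" where
  "tip n u v = (\<Sum>i<n. f4add (f4mul (u i) (f4conj (v i))) (f4mul (f4conj (u i)) (v i)))"

definition additive_code :: "nat \<Rightarrow> (nat \<Rightarrow> f4) set \<Rightarrow> bool" where
  "additive_code n C \<longleftrightarrow> C \<subseteq> vecs n \<and> (\<lambda>_. F0) \<in> C \<and> (\<forall>u\<in>C. \<forall>v\<in>C. vadd u v \<in> C)"

definition trace_dual :: "nat \<Rightarrow> (nat \<Rightarrow> f4) set \<Rightarrow> (nat \<Rightarrow> f4) set" where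
  "trace_dual n C = {v \<in> vecs n. \<forall>c\<in>C. tip n v c = F0}"

definition self_orthogonal :: "nat \<Rightarrow> (nat \<Rightarrow> f4) set \<Rightarrow> bool" where
  "self_orthogonal n C \<longleftrightarrow> C \<subseteq> trace_dual n C"

definition wt :: "nat \<Rightarrow> (nat \<Rightarrow> f4) \<Rightarrow> nat" where
  "wt n v = card {i. i < n \<and> v i \<noteq> F0}"

end

theory Submission
  imports Defs "HOL-Library.FuncSet"
begin


lemma f4mul_F0r [simp]: "f4mul x F0 = F0" by (cases x) auto
lemma f4add_F0r [simp]: "f4add x F0 = x" by (cases x) auto
lemma f4conj_F0 [simp]: "f4conj F0 = F0" by (simp add: f4conj_def)
lemma sum_F0: "(\<Sum>i\<in>A. F0) = F0"
  by (metis sum.neutral_const zero_f4_def)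

lemma tt_add1:
  "f4add (f4mul (f4add a b) (f4conj y)) (f4mul (f4conj (f4add a b)) y) =
   f4add (f4mul a (f4conj y)) (f4mul (f4conj a) y) + f4add (f4mul b (f4conj y)) (f4mul (f4conj b) y)"
  by (cases a; cases b; cases y) (auto simp: f4conj_def plus_f4_def)

lemma tip_add1: "tip n (vadd u u') v = tip n u v + tip n u' v"
  unfolding tip_def vadd_def by (simp only: tt_add1 sum.distrib)

lemma tip_sym: "tip n u v = tip n v u"
  unfolding tip_def
  by (rule sum.cong, simp, rename_tac i, case_tac "u i"; case_tac "v i") (auto simp: f4conj_def)

lemma tip_add2: "tip n u (vadd v v') = tip n u v + tip n u v'"
  by (metis tip_sym tip_add1)

lemma tip01: "tip n u v \<in> {F0, F1}"
proof (induction n)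
  case 0 then show ?case by (simp add: tip_def zero_f4_def)
next
  case (Suc n)
  have t: "f4add (f4mul (u n) (f4conj (v n))) (f4mul (f4conj (u n)) (v n)) \<in> {F0, F1}"
    by (cases "u n"; cases "v n") (auto simp: f4conj_def)
  have "tip (Suc n) u v = tip n u v + f4add (f4mul (u n) (f4conj (v n))) (f4mul (f4conj (u n)) (v n))"
    by (simp add: tip_def)
  with Suc t show ?case by (auto simp: plus_f4_def)
qed

lemma tip_zero2 [simp]: "tip n u (\<lambda>_. F0) = F0"
  by (simp add: tip_def sum_F0)
lemma tip_zero1 [simp]: "tip n (\<lambda>_. F0) u = F0"
  by (metis tip_sym tip_zero2)

lemma vadd_cancel [simp]: "vadd (vadd g h) h = g"
proof -
  have "\<And>a b. f4add (f4add a b) b = a" by (case_tac a; case_tac b) auto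
  then show ?thesis by (simp add: vadd_def)
qed

lemma vecs_vadd: "u \<in> vecs n \<Longrightarrow> v \<in> vecs n \<Longrightarrow> vadd u v \<in> vecs n"
  by (simp add: vecs_def vadd_def)

lemma UNIV_f4: "(UNIV :: f4 set) = {F0, F1, FW, FW2}"
  using f4.exhaust by auto

lemma finite_vecs: "finite (vecs n)"
proof -
  have "vecs n \<subseteq> (\<lambda>f i. if i < n then f i else F0) ` (PiE {..<n} (\<lambda>_. UNIV))"
  proof
    fix v assume v: "v \<in> vecs n"
    have e: "(\<lambda>i. if i < n then (restrict v {..<n}) i else F0) = v"
    proof (rule ext)
      fix i show "(if i < n then (restrict v {..<n}) i else F0) = v i"
        using v by (simp add: vecs_def)
    qed
    show "v \<in> (\<lambda>f i. if i < n then f i else F0) ` (PiE {..<n} (\<lambda>_. UNIV))"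
    proof (rule image_eqI)
      show "v = (\<lambda>f i. if i < n then f i else F0) (restrict v {..<n})" using e by simp
      show "restrict v {..<n} \<in> PiE {..<n} (\<lambda>_. UNIV)" by simp
    qed
  qed
  moreover have "finite (PiE {..<n} (\<lambda>_. (UNIV :: f4 set)))"
    by (rule finite_PiE) (auto simp: UNIV_f4)
  ultimately show ?thesis by (meson finite_imageI finite_subset)
qed

definition chi :: "f4 \<Rightarrow> real" where "chi x = (if x = F0 then 1 else -1)"

lemma char_sum_zero:
  assumes fin: "finite G" and cl: "\<forall>u\<in>G. \<forall>v\<in>G. vadd u v \<in> G" and g0: "g0 \<in> G"
    and add: "\<forall>u\<in>G. \<forall>v\<in>G. \<phi> (vadd u v) = \<phi> u + \<phi> v"
    and b01: "\<forall>u\<in>G. \<phi> u \<in> {F0, F1}" and one: "\<phi> g0 = F1"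
  shows "(\<Sum>g\<in>G. chi (\<phi> g)) = 0"
proof -
  have bij: "bij_betw (\<lambda>g. vadd g g0) G G"
    by (rule bij_betwI[where g="\<lambda>g. vadd g g0"]) (use cl g0 in auto)
  have "(\<Sum>g\<in>G. chi (\<phi> (vadd g g0))) = (\<Sum>g\<in>G. chi (\<phi> g))"
    using sum.reindex_bij_betw[OF bij] by simp
  moreover have "\<And>g. g \<in> G \<Longrightarrow> chi (\<phi> (vadd g g0)) = - chi (\<phi> g)"
  proof -
    fix g assume gG: "g \<in> G"
    then have "\<phi> (vadd g g0) = \<phi> g + F1" using add g0 one by auto
    then show "chi (\<phi> (vadd g g0)) = - chi (\<phi> g)"
      using b01 gG by (auto simp: chi_def plus_f4_def)
  qed
  ultimately have "(\<Sum>g\<in>G. - chi (\<phi> g)) = (\<Sum>g\<in>G. chi (\<phi> g))"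
    by (metis (no_types, lifting) sum.cong)
  then show ?thesis by (simp add: sum_negf)
qed

lemma nondeg:
  assumes "c \<in> vecs n" "c \<noteq> (\<lambda>_. F0)"
  shows "\<exists>w\<in>vecs n. tip n w c = F1"
proof -
  obtain i where ci: "c i \<noteq> F0" using assms(2) by auto
  then have iN: "i < n" using assms(1) by (auto simp: vecs_def not_less[symmetric])
  define a where "a = (if c i = F1 then FW else F1)"
  define w where "w = (\<lambda>j. if j = i then a else F0)"
  have wv: "w \<in> vecs n" using iN by (auto simp: w_def vecs_def)
  have "tip n w c = (\<Sum>j<n. if j = i then f4add (f4mul a (f4conj (c i))) (f4mul (f4conj a) (c i)) else 0)"
    unfolding tip_def by (rule sum.cong) (auto simp: w_def zero_f4_def)
  also have "\<dots> = f4add (f4mul a (f4conj (c i))) (f4mul (f4conj a) (c i))"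
    using iN by (simp add: sum.delta)
  also have "\<dots> = F1" using ci by (cases "c i") (auto simp: a_def f4conj_def)
  finally show ?thesis using wv by blast
qed



lemma wt_count: "card {v \<in> vecs n. wt n v = i} \<le> 3 ^ i * (n choose i)"
proof -
  let ?S = "{S. S \<subseteq> {..<n} \<and> card S = i}"
  let ?D = "SIGMA S:?S. PiE S (\<lambda>_. {F1,FW,FW2})"
  let ?g = "\<lambda>(S,f). (\<lambda>j. if j \<in> S then f j else F0)"
  have sub: "{v \<in> vecs n. wt n v = i} \<subseteq> ?g ` ?D"
  proof
    fix v assume v: "v \<in> {v \<in> vecs n. wt n v = i}"
    define S where "S = {j. j < n \<and> v j \<noteq> F0}"
    have SS: "S \<in> ?S" using v by (auto simp: S_def wt_def)
    have "\<forall>j\<in>S. v j \<in> {F1,FW,FW2}"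
    proof
      fix j assume "j \<in> S" then have "v j \<noteq> F0" by (simp add: S_def)
      then show "v j \<in> {F1,FW,FW2}" by (cases "v j") auto
    qed
    then have fP: "restrict v S \<in> PiE S (\<lambda>_. {F1,FW,FW2})" by (simp add: restrict_PiE_iff)
    have e: "(\<lambda>j. if j \<in> S then restrict v S j else F0) = v"
    proof (rule ext)
      fix j show "(if j \<in> S then restrict v S j else F0) = v j"
        using v by (cases "j < n") (auto simp: S_def vecs_def)
    qed
    show "v \<in> ?g ` ?D"
    proof (rule image_eqI)
      show "v = ?g (S, restrict v S)" using e by simp
      show "(S, restrict v S) \<in> ?D" using SS fP by blast
    qed
  qed
  have finS: "finite ?S" by (rule finite_subset[of _ "Pow {..<n}"]) auto
  have "card ?D = (\<Sum>S\<in>?S. card (PiE S (\<lambda>_. {F1,FW,FW2})))"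
  proof (rule card_SigmaI[OF finS])
    show "\<forall>a\<in>?S. finite (PiE a (\<lambda>_. {F1,FW,FW2}))"
      by (auto intro!: finite_PiE dest: finite_subset)
  qed
  also have "\<dots> = (\<Sum>S\<in>?S. 3 ^ i)"
  proof (rule sum.cong)
    fix S assume "S \<in> ?S"
    then have "finite S" "card S = i" by (auto dest: finite_subset)
    then show "card (PiE S (\<lambda>_. {F1,FW,FW2})) = 3 ^ i" by (simp add: card_PiE numeral_3_eq_3)
  qed simp
  also have "\<dots> = (n choose i) * 3 ^ i" using n_subsets[of "{..<n}" i] by simp
  finally have cD: "card ?D = 3 ^ i * (n choose i)" by simp
  have finD: "finite ?D" using finS by (auto intro!: finite_SigmaI finite_PiE dest: finite_subset)
  have "card {v \<in> vecs n. wt n v = i} \<le> card (?g ` ?D)"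
    by (rule card_mono[OF finite_imageI[OF finD] sub])
  also have "\<dots> \<le> card ?D" by (rule card_image_le[OF finD])
  finally show ?thesis using cD by simp
qed

lemma trace_dual_zero: "(\<lambda>_. F0) \<in> trace_dual n C"
  by (simp add: trace_dual_def vecs_def)

lemma descend:
  assumes ac: "additive_code n C" and finB: "finite B" and BV: "B \<subseteq> vecs n"
    and alive: "\<forall>b\<in>B. b \<notin> trace_dual n C"
    and small: "card B + 1 < card C"
    and dc: "card C * card (trace_dual n C) = card (vecs n)"
  shows "\<exists>C'. additive_code n C' \<and> C' \<subseteq> C \<and> 2 * card C' = card C \<and> (\<forall>b\<in>B. b \<notin> trace_dual n C')"
proof -
  let ?V = "vecs n" and ?D = "trace_dual n C"
  have CV: "C \<subseteq> ?V" using ac by (simp add: additive_code_def)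
  have finV: "finite ?V" by (rule finite_vecs)
  have finC: "finite C" using CV finV finite_subset by blast
  have DV: "?D \<subseteq> ?V" by (auto simp: trace_dual_def)
  have finD: "finite ?D" using DV finV finite_subset by blast
  have clC: "\<forall>u\<in>C. \<forall>v\<in>C. vadd u v \<in> C" using ac by (simp add: additive_code_def)
  have z: "(\<lambda>_. F0) \<in> C" using ac by (simp add: additive_code_def)
  define Bad where "Bad = ?D \<union> (\<Union>b\<in>B. (\<lambda>u. vadd u b) ` ?D)"
  have "card Bad \<le> card ?D + card (\<Union>b\<in>B. (\<lambda>u. vadd u b) ` ?D)"
    unfolding Bad_def by (rule card_Un_le)
  also have "card (\<Union>b\<in>B. (\<lambda>u. vadd u b) ` ?D) \<le> (\<Sum>b\<in>B. card ((\<lambda>u. vadd u b) ` ?D))"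
    by (rule card_UN_le[OF finB])
  also have "\<dots> \<le> (\<Sum>b\<in>B. card ?D)"
    by (rule sum_mono) (rule card_image_le[OF finD])
  finally have cb: "card Bad \<le> (card B + 1) * card ?D" by simp
  have "card ?D > 0" using finD trace_dual_zero[of n C] by (auto simp: card_gt_0_iff)
  then have "(card B + 1) * card ?D < card C * card ?D"
    using mult_less_mono1[of "card B + 1" "card C" "card ?D"] small by simp
  then have "card Bad < card ?V" using cb dc by linarith
  then have "\<not> ?V \<subseteq> Bad"
    using Bad_def finV card_mono finite_subset not_le by (metis (no_types, lifting) finD finite_UN finite_Un finite_imageI finB)
  then obtain w where wV: "w \<in> ?V" and wB: "w \<notin> Bad" by blast
  have wD: "w \<notin> ?D" using wB by (simp add: Bad_def)
  have wb: "\<And>b. b \<in> B \<Longrightarrow> vadd w b \<notin> ?D"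
  proof
    fix b assume bB: "b \<in> B" and "vadd w b \<in> ?D"
    then have "w \<in> (\<lambda>u. vadd u b) ` ?D" by (metis image_eqI vadd_cancel)
    then show False using wB bB by (auto simp: Bad_def)
  qed
  define C' where "C' = {c \<in> C. tip n w c = F0}"
  have ac': "additive_code n C'"
    unfolding additive_code_def C'_def using CV z clC
    by (auto simp: tip_add2 plus_f4_def)
  obtain c0 where c0: "c0 \<in> C" "tip n w c0 \<noteq> F0" using wD wV by (auto simp: trace_dual_def)
  then have c01: "tip n w c0 = F1" using tip01[of n w c0] by auto
  have s0: "(\<Sum>c\<in>C. chi (tip n w c)) = 0"
  proof (rule char_sum_zero[OF finC clC c0(1)])
    show "\<forall>u\<in>C. tip n w u \<in> {F0, F1}" using tip01 by blast
  qed (use c01 in \<open>simp_all add: tip_add2\<close>)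
  have C'C: "C' \<subseteq> C" by (auto simp: C'_def)
  have "(\<Sum>c\<in>C. chi (tip n w c)) = (\<Sum>c\<in>C'. chi (tip n w c)) + (\<Sum>c\<in>C - C'. chi (tip n w c))"
    using sum.subset_diff[OF C'C finC] by (simp add: add.commute)
  also have "(\<Sum>c\<in>C'. chi (tip n w c)) = real (card C')"
    by (simp add: C'_def chi_def)
  also have "(\<Sum>c\<in>C - C'. chi (tip n w c)) = - real (card (C - C'))"
    by (simp add: C'_def chi_def)
  finally have "real (card C') = real (card (C - C'))" using s0 by simp
  then have e1: "card C' = card (C - C')" by simp
  have "card C = card C' + card (C - C')"
    using card_Diff_subset[OF finite_subset[OF C'C finC] C'C] card_mono[OF finC C'C] by simp
  then have cc: "2 * card C' = card C" using e1 by simp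
  have al: "\<forall>b\<in>B. b \<notin> trace_dual n C'"
  proof
    fix b assume bB: "b \<in> B"
    show "b \<notin> trace_dual n C'"
    proof
      assume bD: "b \<in> trace_dual n C'"
      have bV: "b \<in> ?V" using bB BV by auto
      obtain c1 where c1: "c1 \<in> C" "tip n b c1 \<noteq> F0"
        using alive bB bV by (auto simp: trace_dual_def)
      then have b1: "tip n b c1 = F1" using tip01[of n b c1] by auto
      have key: "\<And>c. c \<in> C \<Longrightarrow> tip n w c = F0 \<Longrightarrow> tip n b c = F0"
        using bD by (auto simp: trace_dual_def C'_def)
      have w1: "tip n w c1 = F1" using key[OF c1(1)] c1 tip01[of n w c1] by auto
      have "vadd w b \<in> ?D"
        unfolding trace_dual_def
      proof (intro CollectI conjI ballI)
        show "vadd w b \<in> ?V" using wV bV by (rule vecs_vadd)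
        fix c assume cC: "c \<in> C"
        show "tip n (vadd w b) c = F0"
        proof (cases "tip n w c = F0")
          case True
          then show ?thesis using key[OF cC] by (simp add: tip_add1 plus_f4_def)
        next
          case False
          then have wc: "tip n w c = F1" using tip01[of n w c] by auto
          have "vadd c c1 \<in> C" using clC cC c1(1) by auto
          moreover have "tip n w (vadd c c1) = F0" using wc w1 by (simp add: tip_add2 plus_f4_def)
          ultimately have "tip n b (vadd c c1) = F0" by (rule key)
          then have "tip n b c = F1"
            using b1 tip01[of n b c] by (auto simp: tip_add2 plus_f4_def)
          then show ?thesis using wc by (simp add: tip_add1 plus_f4_def)
        qed
      qed
      then show False using wb[OF bB] by simp
    qed
  qed
  show ?thesis using ac' C'C cc al by blast
qed




lemma dual_card:
  assumes ac: "additive_code n C"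
  shows "card C * card (trace_dual n C) = card (vecs n)"
proof -
  let ?V = "vecs n" and ?D = "trace_dual n C"
  have CV: "C \<subseteq> ?V" using ac by (simp add: additive_code_def)
  have finV: "finite ?V" by (rule finite_vecs)
  have finC: "finite C" using CV finV finite_subset by blast
  have DV: "?D \<subseteq> ?V" by (auto simp: trace_dual_def)
  have finD: "finite ?D" using DV finV finite_subset by blast
  have clC: "\<forall>u\<in>C. \<forall>v\<in>C. vadd u v \<in> C" using ac by (simp add: additive_code_def)
  have clV: "\<forall>u\<in>?V. \<forall>v\<in>?V. vadd u v \<in> ?V" by (simp add: vecs_vadd)
  have z: "(\<lambda>_. F0) \<in> C" using ac by (simp add: additive_code_def)
  have L: "(\<Sum>w\<in>?V. \<Sum>c\<in>C. chi (tip n w c)) = (\<Sum>w\<in>?V. if w \<in> ?D then real (card C) else 0)"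
  proof (rule sum.cong)
    fix w assume wV: "w \<in> ?V"
    show "(\<Sum>c\<in>C. chi (tip n w c)) = (if w \<in> ?D then real (card C) else 0)"
    proof (cases "w \<in> ?D")
      case True
      then have "\<forall>c\<in>C. tip n w c = F0" by (simp add: trace_dual_def)
      then show ?thesis using True by (simp add: chi_def)
    next
      case False
      then obtain c0 where c0: "c0 \<in> C" "tip n w c0 \<noteq> F0" using wV by (auto simp: trace_dual_def)
      have "tip n w c0 = F1" using tip01[of n w c0] c0 by auto
      have "(\<Sum>c\<in>C. chi (tip n w c)) = 0"
        proof (rule char_sum_zero[OF finC clC c0(1)])
          show "\<forall>u\<in>C. tip n w u \<in> {F0, F1}" using tip01 by blast
        qed (use \<open>tip n w c0 = F1\<close> in \<open>simp_all add: tip_add2\<close>)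
      then show ?thesis using False by simp
    qed
  qed simp
  have R: "(\<Sum>c\<in>C. \<Sum>w\<in>?V. chi (tip n w c)) = (\<Sum>c\<in>C. if c = (\<lambda>_. F0) then real (card ?V) else 0)"
  proof (rule sum.cong)
    fix c assume cC: "c \<in> C"
    show "(\<Sum>w\<in>?V. chi (tip n w c)) = (if c = (\<lambda>_. F0) then real (card ?V) else 0)"
    proof (cases "c = (\<lambda>_. F0)")
      case True then show ?thesis by (simp add: chi_def)
    next
      case False
      then obtain w0 where w0: "w0 \<in> ?V" "tip n w0 c = F1" using nondeg cC CV by blast
      have "(\<Sum>w\<in>?V. chi (tip n w c)) = 0"
        proof (rule char_sum_zero[OF finV clV w0(1)])
          show "\<forall>u\<in>?V. tip n u c \<in> {F0, F1}" using tip01 by blast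
        qed (use w0 in \<open>simp_all add: tip_add1\<close>)
      then show ?thesis using False by simp
    qed
  qed simp
  have "(\<Sum>w\<in>?V. \<Sum>c\<in>C. chi (tip n w c)) = (\<Sum>c\<in>C. \<Sum>w\<in>?V. chi (tip n w c))"
    by (rule sum.swap)
  then have "(\<Sum>w\<in>?V. if w \<in> ?D then real (card C) else 0) = (\<Sum>c\<in>C. if c = (\<lambda>_. F0) then real (card ?V) else 0)"
    using L R by simp
  moreover have "(\<Sum>w\<in>?V. if w \<in> ?D then real (card C) else 0) = real (card C) * real (card ?D)"
    using finV DV by (simp add: sum.If_cases Int_absorb1 Int_commute)
  moreover have "(\<Sum>c\<in>C. if c = (\<lambda>_. F0) then real (card ?V) else 0) = real (card ?V)"
    using finC z by (simp add: sum.delta')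
  ultimately have "real (card C) * real (card ?D) = real (card ?V)" by simp
  then show ?thesis by (metis of_nat_eq_iff of_nat_mult)
qed


theorem mainTheorem9:
  fixes n k1 k2 d1 d :: nat and C1 :: "(nat \<Rightarrow> f4) set"
  assumes "n \<ge> 1" and "k1 < k2" and "k2 \<le> n"
    and "additive_code n C1" and "self_orthogonal n C1"
    and "card C1 = 2 ^ (n - k1)"
    and "\<forall>v\<in>trace_dual n C1. v \<noteq> (\<lambda>_. F0) \<longrightarrow> wt n v \<ge> d1"
    and "d \<ge> 1"
    and "(\<Sum>i=1..d-1. 3 ^ i * real (n choose i))
           < (2 ^ (n - k1) - 1) / (2 ^ (k2 - k1) - 1)"
  shows "\<exists>C2. additive_code n C2 \<and> self_orthogonal n C2 \<and> C2 \<subseteq> C1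
           \<and> card C2 = 2 ^ (n - k2)
           \<and> (\<forall>v\<in>trace_dual n C2. v \<noteq> (\<lambda>_. F0) \<longrightarrow> wt n v \<ge> min d d1)"
proof -
  define N where "N = n - k1"
  define r where "r = k2 - k1"
  have r1: "1 \<le> r" and rN: "r \<le> N" using assms(2,3) by (auto simp: N_def r_def)
  define B where "B = {v \<in> vecs n. v \<noteq> (\<lambda>_. F0) \<and> wt n v < d \<and> v \<notin> trace_dual n C1}"
  have BV: "B \<subseteq> vecs n" by (auto simp: B_def)
  have finB: "finite B" using BV finite_vecs finite_subset by blast
  have Bsub: "B \<subseteq> (\<Union>i\<in>{1..d-1}. {v \<in> vecs n. wt n v = i})"
  proof
    fix v assume vB: "v \<in> B"
    then have vV: "v \<in> vecs n" and vnz: "v \<noteq> (\<lambda>_. F0)" and vd: "wt n v < d" by (auto simp: B_def)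
    obtain j where j: "v j \<noteq> F0" using vnz by auto
    then have "j < n" using vV by (auto simp: vecs_def not_less[symmetric])
    then have "j \<in> {i. i < n \<and> v i \<noteq> F0}" using j by simp
    moreover have "finite {i. i < n \<and> v i \<noteq> F0}" by simp
    ultimately have "wt n v \<ge> 1" unfolding wt_def
      by (metis One_nat_def Suc_leI card_gt_0_iff empty_iff)
    then show "v \<in> (\<Union>i\<in>{1..d-1}. {v \<in> vecs n. wt n v = i})" using vV vd by auto
  qed
  have "card B \<le> card (\<Union>i\<in>{1..d-1}. {v \<in> vecs n. wt n v = i})"
    by (rule card_mono[OF _ Bsub]) (auto intro: finite_subset[OF _ finite_vecs])
  also have "\<dots> \<le> (\<Sum>i=1..d-1. card {v \<in> vecs n. wt n v = i})"
    by (rule card_UN_le) simp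
  also have "\<dots> \<le> (\<Sum>i=1..d-1. 3 ^ i * (n choose i))"
    by (rule sum_mono) (rule wt_count)
  finally have cardB: "card B \<le> (\<Sum>i=1..d-1. 3 ^ i * (n choose i))" .
  then have "real (card B) \<le> real (\<Sum>i=1..d-1. 3 ^ i * (n choose i))" by (simp only: of_nat_le_iff)
  also have "\<dots> = (\<Sum>i=1..d-1. 3 ^ i * real (n choose i))" by simp
  finally have rB: "real (card B) < (2 ^ N - 1) / (2 ^ r - 1)"
    using assms(9) unfolding N_def r_def by linarith
  define Q :: real where "Q = 2 ^ (N - r)"
  define a :: real where "a = 2 ^ r"
  have Q1: "Q \<ge> 1" by (simp add: Q_def)
  have a2: "a \<ge> 2" using r1 unfolding a_def
    by (metis power_increasing power_one_right one_le_numeral)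
  have PaQ: "(2::real) ^ N = a * Q" unfolding a_def Q_def
    by (metis power_add rN le_add_diff_inverse)
  have "(a - 2) * (Q - 1) \<ge> 0" using a2 Q1 by simp
  then have "a * Q - 1 \<le> (2 * Q - 1) * (a - 1)" by (simp add: algebra_simps)
  then have "(a * Q - 1) / (a - 1) \<le> 2 * Q - 1" using a2 by (simp add: divide_le_eq)
  then have "real (card B) < 2 * Q - 1" using rB PaQ by (simp add: a_def)
  then have "real (card B + 1) < real (2 * 2 ^ (N - r))" by (simp add: Q_def)
  then have small: "card B + 1 < 2 * 2 ^ (N - r)" by (simp only: of_nat_less_iff)
  have claim: "j \<le> r \<Longrightarrow> \<exists>C. additive_code n C \<and> C \<subseteq> C1 \<and> card C = 2 ^ (N - j) \<and> (\<forall>b\<in>B. b \<notin> trace_dual n C)" for j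
  proof (induction j)
    case 0
    show ?case using assms(4,6) by (intro exI[of _ C1]) (auto simp: N_def B_def)
  next
    case (Suc j)
    then obtain C where C: "additive_code n C" "C \<subseteq> C1" "card C = 2 ^ (N - j)" "\<forall>b\<in>B. b \<notin> trace_dual n C"
      by auto
    have "(2::nat) * 2 ^ (N - r) = 2 ^ Suc (N - r)" by simp
    also have "\<dots> \<le> 2 ^ (N - j)" using Suc.prems rN by (intro power_increasing) auto
    finally have sm: "card B + 1 < card C" using small C(3) by linarith
    obtain C' where C': "additive_code n C'" "C' \<subseteq> C" "2 * card C' = card C" "\<forall>b\<in>B. b \<notin> trace_dual n C'"
      using descend[OF C(1) finB BV C(4) sm dual_card[OF C(1)]] by blast
    have "N - j = Suc (N - Suc j)" using Suc.prems rN by auto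
    then have "card C' = 2 ^ (N - Suc j)" using C'(3) C(3) by simp
    then show ?case using C' C(2) by blast
  qed
  obtain C2 where C2: "additive_code n C2" "C2 \<subseteq> C1" "card C2 = 2 ^ (N - r)" "\<forall>b\<in>B. b \<notin> trace_dual n C2"
    using claim[of r] by auto
  have Nr: "N - r = n - k2" using assms(2,3) by (simp add: N_def r_def)
  have so: "self_orthogonal n C2"
    using assms(5) C2(2) unfolding self_orthogonal_def trace_dual_def by blast
  have wtc: "\<forall>v\<in>trace_dual n C2. v \<noteq> (\<lambda>_. F0) \<longrightarrow> wt n v \<ge> min d d1"
  proof (intro ballI impI)
    fix v assume vD: "v \<in> trace_dual n C2" and vnz: "v \<noteq> (\<lambda>_. F0)"
    show "wt n v \<ge> min d d1"
    proof (cases "v \<in> trace_dual n C1")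
      case True then show ?thesis using assms(7) vnz by fastforce
    next
      case False
      have "\<not> wt n v < d"
      proof
        assume "wt n v < d"
        then have "v \<in> B" using False vD vnz by (auto simp: B_def trace_dual_def)
        then show False using C2(4) vD by blast
      qed
      then show ?thesis by simp
    qed
  qed
  show ?thesis using C2 so wtc Nr by auto
qed

end
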